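(* Let $G$ be a metabelian group and $g\in G$. Then every right Engel sink of $g^{-1}$ is a left Engel sink of $g$. In particular, if $g^{-1}$ has a finite (minimal) right Engel sink $\mathscr R(g^{-1})$, then $g$ has a finite left Engel sink and $\mathscr E(g)\subseteq\mathscr R(g^{-1})$.
   Context: Commutators: $a^b=b^{-1}ab$, $[a,b]=a^{-1}b^{-1}ab$, and $[a,{}_nb]=[\dots[[a,b],b],\dots,b]$ with $b$ repeated $n$ times. A right Engel sink of $g\in G$ is a set $\mathscr R\subseteq G$ such that for every $x\in G$ there is a positive integer $r(x)$ with $[g,{}_nx]\in\mathscr R$ for all $n\ge r(x)$; a left Engel sink of $g$ is a set $\mathscr E\subseteq G$ such that for every $x\in G$ there is a positive integer $l(x)$ with $[x,{}_ng]\in\mathscr E$ for all $n\ge l(x)$. When finite sinks exist, the intersection of all finite right (resp. left) Engel sinks of $g$ is again one; these minimal sinks are denoted $\mathscr R(g)$ and $\mathscr E(g)$. A group is metabelian if its derived subgroup is abelian. *)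

theory Defs
  imports "HOL-Algebra.Algebra"
begin

definition gcomm :: "('a, 'b) monoid_scheme \<Rightarrow> 'a \<Rightarrow> 'a \<Rightarrow> 'a" where
  "gcomm G a b = inv\<^bsub>G\<^esub> a \<otimes>\<^bsub>G\<^esub> inv\<^bsub>G\<^esub> b \<otimes>\<^bsub>G\<^esub> a \<otimes>\<^bsub>G\<^esub> b"

primrec engel_comm :: "('a, 'b) monoid_scheme \<Rightarrow> 'a \<Rightarrow> nat \<Rightarrow> 'a \<Rightarrow> 'a" where
  "engel_comm G a 0 b = a"
| "engel_comm G a (Suc n) b = gcomm G (engel_comm G a n b) b"

definition metabelian :: "('a, 'b) monoid_scheme \<Rightarrow> bool" where
  "metabelian G \<longleftrightarrow>
     (\<forall>x \<in> derived G (carrier G). \<forall>y \<in> derived G (carrier G). x \<otimes>\<^bsub>G\<^esub> y = y \<otimes>\<^bsub>G\<^esub> x)"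

definition right_engel_sink :: "('a, 'b) monoid_scheme \<Rightarrow> 'a \<Rightarrow> 'a set \<Rightarrow> bool" where
  "right_engel_sink G g R \<longleftrightarrow> R \<subseteq> carrier G \<and>
     (\<forall>x \<in> carrier G. \<exists>r > 0. \<forall>n \<ge> r. engel_comm G g n x \<in> R)"

definition left_engel_sink :: "('a, 'b) monoid_scheme \<Rightarrow> 'a \<Rightarrow> 'a set \<Rightarrow> bool" where
  "left_engel_sink G g E \<longleftrightarrow> E \<subseteq> carrier G \<and>
     (\<forall>x \<in> carrier G. \<exists>l > 0. \<forall>n \<ge> l. engel_comm G x n g \<in> E)"

text \<open>Minimal sinks: intersection of all finite sinks (meaningful when one exists).\<close>
definition min_right_sink :: "('a, 'b) monoid_scheme \<Rightarrow> 'a \<Rightarrow> 'a set" where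
  "min_right_sink G g = \<Inter> {R. finite R \<and> right_engel_sink G g R}"

definition min_left_sink :: "('a, 'b) monoid_scheme \<Rightarrow> 'a \<Rightarrow> 'a set" where
  "min_left_sink G g = \<Inter> {E. finite E \<and> left_engel_sink G g E}"

end

theory Submission
  imports Defs
begin

lemma (in group) canc1: "x \<in> carrier G \<Longrightarrow> z \<in> carrier G \<Longrightarrow> x \<otimes> (inv x \<otimes> z) = z"
  by (simp add: m_assoc[symmetric])
lemma (in group) canc2: "x \<in> carrier G \<Longrightarrow> z \<in> carrier G \<Longrightarrow> inv x \<otimes> (x \<otimes> z) = z"
  by (simp add: m_assoc[symmetric])

lemma gcomm_closed: "group G \<Longrightarrow> a \<in> carrier G \<Longrightarrow> b \<in> carrier G \<Longrightarrow> gcomm G a b \<in> carrier G"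
  by (simp add: gcomm_def group.inv_closed group.subgroupE(4) group.subgroup_self monoid.m_closed group.is_monoid)

lemma gcomm_derived:
  fixes G (structure)
  assumes "group G" "a \<in> carrier G" "b \<in> carrier G"
  shows "gcomm G a b \<in> derived G (carrier G)"
proof -
  interpret group G by fact
  have "gcomm G a b = inv a \<otimes> inv b \<otimes> inv (inv a) \<otimes> inv (inv b)"
    using assms by (simp add: gcomm_def)
  moreover have "inv a \<otimes> inv b \<otimes> inv (inv a) \<otimes> inv (inv b) \<in> derived_set G (carrier G)"
    using assms by (intro UN_I[of "inv a"] UN_I[of "inv b"]) auto
  ultimately show ?thesis unfolding derived_def by (simp add: generate.incl)
qed

lemma key1:
  fixes G (structure)
  assumes "group G" "c \<in> carrier G" "g \<in> carrier G"
  shows "gcomm G (inv\<^bsub>G\<^esub> g) (c \<otimes>\<^bsub>G\<^esub> g) = gcomm G c g"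
proof -
  interpret group G by fact
  have "gcomm G (inv g) (c \<otimes> g) = g \<otimes> (inv g \<otimes> inv c) \<otimes> inv g \<otimes> (c \<otimes> g)"
    using assms by (simp add: gcomm_def inv_mult_group m_assoc group.canc1[OF assms(1)] group.canc2[OF assms(1)])
  also have "\<dots> = (g \<otimes> inv g) \<otimes> (inv c \<otimes> inv g \<otimes> c \<otimes> g)"
    using assms by (simp add: m_assoc group.canc1[OF assms(1)])
  also have "\<dots> = gcomm G c g" using assms by (simp add: gcomm_def m_assoc group.canc1[OF assms(1)])
  finally show ?thesis .
qed

lemma key2:
  fixes G (structure)
  assumes "group G" "metabelian G" "a \<in> derived G (carrier G)" "c \<in> derived G (carrier G)"
    "g \<in> carrier G"
  shows "gcomm G a (c \<otimes>\<^bsub>G\<^esub> g) = gcomm G a g"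
proof -
  interpret group G by fact
  have sub: "derived G (carrier G) \<subseteq> carrier G" by (simp add: derived_in_carrier)
  have ac: "a \<otimes> c = c \<otimes> a" using assms(2-4) unfolding metabelian_def by blast
  have A: "a \<in> carrier G" "c \<in> carrier G" using assms sub by auto
  have "gcomm G a (c \<otimes> g) = inv a \<otimes> inv g \<otimes> (inv c \<otimes> (a \<otimes> c)) \<otimes> g"
    using A assms by (simp add: gcomm_def inv_mult_group m_assoc group.canc1[OF assms(1)] group.canc2[OF assms(1)])
  also have "\<dots> = inv a \<otimes> inv g \<otimes> ((inv c \<otimes> c) \<otimes> a) \<otimes> g"
    using A assms by (simp add: ac m_assoc group.canc1[OF assms(1)] group.canc2[OF assms(1)])
  also have "\<dots> = gcomm G a g" using A assms by (simp add: gcomm_def m_assoc group.canc1[OF assms(1)] group.canc2[OF assms(1)])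
  finally show ?thesis .
qed

lemma engel_closed: "group G \<Longrightarrow> a \<in> carrier G \<Longrightarrow> b \<in> carrier G \<Longrightarrow> engel_comm G a n b \<in> carrier G"
  by (induction n) (auto simp: gcomm_closed)

lemma key3:
  fixes G (structure)
  assumes "group G" "metabelian G" "x \<in> carrier G" "g \<in> carrier G" "n \<ge> 1"
  shows "engel_comm G (inv\<^bsub>G\<^esub> g) n (gcomm G x g \<otimes>\<^bsub>G\<^esub> g) = engel_comm G x (Suc n) g"
  using assms(5)
proof (induction n rule: dec_induct)
  case base
  have "engel_comm G (inv g) 1 (gcomm G x g \<otimes> g) = gcomm G (inv g) (gcomm G x g \<otimes> g)"
    by (simp only: One_nat_def engel_comm.simps)
  also have "\<dots> = gcomm G (gcomm G x g) g"
    by (rule key1[OF assms(1) gcomm_closed[OF assms(1,3,4)] assms(4)])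
  also have "\<dots> = engel_comm G x (Suc 1) g"
    by (simp only: One_nat_def engel_comm.simps)
  finally show ?case .
next
  case (step n)
  have c: "gcomm G x g \<in> derived G (carrier G)" by (rule gcomm_derived[OF assms(1,3,4)])
  have d: "engel_comm G x (Suc n) g \<in> derived G (carrier G)"
    unfolding engel_comm.simps by (rule gcomm_derived[OF assms(1) engel_closed[OF assms(1,3,4)] assms(4)])
  have "engel_comm G (inv g) (Suc n) (gcomm G x g \<otimes> g) = gcomm G (engel_comm G (inv g) n (gcomm G x g \<otimes> g)) (gcomm G x g \<otimes> g)"
    by (simp only: engel_comm.simps)
  also have "\<dots> = gcomm G (engel_comm G x (Suc n) g) (gcomm G x g \<otimes> g)"
    by (simp only: step.IH)
  also have "\<dots> = gcomm G (engel_comm G x (Suc n) g) g"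
    by (rule key2[OF assms(1,2) d c assms(4)])
  also have "\<dots> = engel_comm G x (Suc (Suc n)) g"
    by (simp only: engel_comm.simps)
  finally show ?case .
qed

theorem lemma2p5:
  fixes G (structure) and g :: 'a
  assumes "group G" and "metabelian G" and "g \<in> carrier G"
  shows "(\<forall>R. right_engel_sink G (inv\<^bsub>G\<^esub> g) R \<longrightarrow> left_engel_sink G g R)
    \<and> ((\<exists>R. finite R \<and> right_engel_sink G (inv\<^bsub>G\<^esub> g) R) \<longrightarrow>
         (\<exists>E. finite E \<and> left_engel_sink G g E)
         \<and> min_left_sink G g \<subseteq> min_right_sink G (inv\<^bsub>G\<^esub> g))"
proof -
  interpret group G by fact
  have P1: "left_engel_sink G g R" if R: "right_engel_sink G (inv g) R" for R
    unfolding left_engel_sink_def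
  proof (intro conjI ballI)
    show "R \<subseteq> carrier G" using R unfolding right_engel_sink_def by blast
    fix x assume x: "x \<in> carrier G"
    have y: "gcomm G x g \<otimes> g \<in> carrier G" using x assms by (simp add: gcomm_closed)
    then obtain r where r: "r > 0" "\<forall>n \<ge> r. engel_comm G (inv g) n (gcomm G x g \<otimes> g) \<in> R"
      using R unfolding right_engel_sink_def by blast
    have "\<forall>n \<ge> Suc r. engel_comm G x n g \<in> R"
    proof (intro allI impI)
      fix n assume n: "n \<ge> Suc r"
      then obtain m where m: "n = Suc m" "m \<ge> r" by (cases n) auto
      have "engel_comm G x n g = engel_comm G (inv g) m (gcomm G x g \<otimes> g)"
        using key3[OF assms(1,2) x assms(3), of m] m r by simp
      thus "engel_comm G x n g \<in> R" using r m by simp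
    qed
    thus "\<exists>l>0. \<forall>n\<ge>l. engel_comm G x n g \<in> R" by blast
  qed
  have "{R. finite R \<and> right_engel_sink G (inv g) R} \<subseteq> {E. finite E \<and> left_engel_sink G g E}"
    using P1 by blast
  hence "min_left_sink G g \<subseteq> min_right_sink G (inv g)"
    unfolding min_left_sink_def min_right_sink_def by (rule Inter_anti_mono)
  thus ?thesis using P1 by blast
qed

end
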